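(* Let $N\ge 1$, let $H\in\mathbb{C}^{N\times N}$ satisfy $H=H^\dagger=H^2$ (an orthogonal projector), let $|\psi_0\rangle\in\mathbb{C}^N$ be a unit vector and $\psi_0:=|\psi_0\rangle\langle\psi_0|$. Define $f:\mathrm{U}(N)\to\mathbb{R}$ by $f(U)=\operatorname{Tr}(HU\psi_0U^\dagger)$ and write $\psi_U:=U\psi_0U^\dagger$. Then the skew-Hermitian part of the Riemannian gradient of $f$ at $U$ is \[\widetilde{\operatorname{grad}} f(U)=[H,\psi_U]=H\psi_U-\psi_U H .\] Moreover, $\widetilde{\operatorname{grad}} f(U)=0$ if and only if $U$ is a global optimizer (global minimizer or global maximizer) of $f$ over $\mathrm{U}(N)$; and in that case $f(U)\in\{0,1\}$, where the value $0$ corresponds to the global minimum $0$ and the value $1$ to the global maximum $1$.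
   Context: $\mathrm{U}(N)=\{U\in\mathbb{C}^{N\times N}:U^\dagger U=I\}$ is regarded as a Riemannian submanifold of $\mathbb{C}^{N\times N}$ with the real inner product $\langle A,B\rangle=\operatorname{Re}\operatorname{Tr}(A^\dagger B)$ (the canonical metric induced by the Frobenius inner product). Its tangent space at $U$ is $\{\Omega U:\Omega^\dagger=-\Omega\}$. The Riemannian gradient $\operatorname{grad} f(U)$ is the unique tangent vector with $\langle \operatorname{grad} f(U),\xi\rangle=\mathrm{D}f(U)[\xi]$ for all tangent vectors $\xi$ at $U$; its skew-Hermitian part $\widetilde{\operatorname{grad}} f(U)$ is the unique skew-Hermitian matrix $\Omega$ with $\operatorname{grad} f(U)=\Omega U$. *)

theory Defs
  imports "HOL-Analysis.Analysis"
begin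

text \<open>Complex N x N matrices are modelled as complex^'n^'n for a finite index type 'n
  (so N = CARD('n) \<ge> 1). Conjugate transpose:\<close>
definition cadj :: "complex^'n^'n \<Rightarrow> complex^'n^'n" where
  "cadj A = (\<chi> i j. cnj (A $ j $ i))"

definition unitary :: "complex^'n^'n \<Rightarrow> bool" where
  "unitary U \<longleftrightarrow> cadj U ** U = mat 1"

definition minner :: "complex^'n^'n \<Rightarrow> complex^'n^'n \<Rightarrow> real" where
  "minner A B = Re (trace (cadj A ** B))"

definition skew_herm :: "complex^'n^'n \<Rightarrow> bool" where
  "skew_herm \<Omega> \<longleftrightarrow> cadj \<Omega> = - \<Omega>"

definition tangent_space :: "complex^'n^'n \<Rightarrow> (complex^'n^'n) set" where
  "tangent_space U = {\<Omega> ** U | \<Omega>. skew_herm \<Omega>}"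

definition is_riem_grad :: "(complex^'n^'n \<Rightarrow> real) \<Rightarrow> complex^'n^'n \<Rightarrow> complex^'n^'n \<Rightarrow> bool" where
  "is_riem_grad f U G \<longleftrightarrow> G \<in> tangent_space U \<and>
     (\<exists>Df. (f has_derivative Df) (at U within {V. unitary V}) \<and>
        (\<forall>\<xi>\<in>tangent_space U. minner G \<xi> = Df \<xi>))"

definition skew_grad :: "(complex^'n^'n \<Rightarrow> real) \<Rightarrow> complex^'n^'n \<Rightarrow> complex^'n^'n" where
  "skew_grad f U = (THE \<Omega>. skew_herm \<Omega> \<and> is_riem_grad f U (\<Omega> ** U))"

definition proj :: "complex^'n \<Rightarrow> complex^'n^'n" where
  "proj v = (\<chi> i j. v $ i * cnj (v $ j))"

end

theory Submission
  imports Defs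
begin


lemma cadj_component[simp]: "cadj A $ i $ j = cnj (A $ j $ i)"
  by (simp add: cadj_def)

lemma cadj_cadj[simp]: "cadj (cadj A) = A"
  by (simp add: vec_eq_iff)

lemma cadj_mult: "cadj (A ** B) = cadj B ** cadj A"
  by (simp add: vec_eq_iff matrix_matrix_mult_def mult.commute)

lemma cadj_add: "cadj (A + B) = cadj A + cadj B"
  by (simp add: vec_eq_iff)

lemma cadj_diff: "cadj (A - B) = cadj A - cadj B"
  by (simp add: vec_eq_iff)

lemma cadj_uminus: "cadj (- A) = - cadj A"
  by (simp add: vec_eq_iff)

definition smat :: "complex \<Rightarrow> complex^'n^'m \<Rightarrow> complex^'n^'m" where
  "smat c A = (\<chi> i j. c * A$i$j)"

lemma smat_component[simp]: "smat c A $ i $ j = c * A$i$j"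
  by (simp add: smat_def)

lemma cadj_smult: "cadj (smat c A) = smat (cnj c) (cadj A)"
  by (simp add: vec_eq_iff)

lemma cadj_mat1[simp]: "cadj (mat 1) = mat 1"
  by (simp add: vec_eq_iff mat_def)

lemma cadj_zero[simp]: "cadj 0 = 0"
  by (simp add: vec_eq_iff)

lemma smult_mm_left: "(smat c A) ** (B::complex^'n^'m) = smat c (A ** B)"
  by (simp add: vec_eq_iff matrix_matrix_mult_def sum_distrib_left mult.assoc)

lemma smult_mm_right: "(A::complex^'n^'m) ** (smat c B) = smat c (A ** B)"
  by (simp add: vec_eq_iff matrix_matrix_mult_def sum_distrib_left mult_ac)

lemma mm_add_right: "((A::complex^'n^'m) + B) ** C = A ** C + B ** C"
  by (simp add: vec_eq_iff matrix_matrix_mult_def sum.distrib distrib_right)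

lemma mm_diff_right: "((A::complex^'n^'m) - B) ** C = A ** C - B ** C"
  by (simp add: vec_eq_iff matrix_matrix_mult_def sum_subtractf left_diff_distrib)

lemma mm_diff_left: "(A::complex^'n^'m) ** (B - C) = A ** B - A ** C"
  by (simp add: vec_eq_iff matrix_matrix_mult_def sum_subtractf right_diff_distrib)

lemma mm_uminus_left: "(- A::complex^'n^'m) ** C = - (A ** C)"
  by (simp add: vec_eq_iff matrix_matrix_mult_def sum_negf)

lemma mm_uminus_right: "(A::complex^'n^'m) ** (- C) = - (A ** C)"
  by (simp add: vec_eq_iff matrix_matrix_mult_def sum_negf)

lemma trace_smult: "trace (smat c (A::complex^'n^'n)) = c * trace A"
  by (simp add: trace_def sum_distrib_left)

lemma trace_cadj: "trace (cadj A) = cnj (trace A)"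
  by (simp add: trace_def)

lemma trace_uminus: "trace (- (A::complex^'n^'n)) = - trace A"
  by (simp add: trace_def sum_negf)

lemma scaleR_smult: "r *\<^sub>R (A::complex^'n^'m) = smat (complex_of_real r) A"
  by (simp add: vec_eq_iff scaleR_conv_of_real[where 'a=complex])

definition cip :: "complex^'n \<Rightarrow> complex^'n \<Rightarrow> complex" where
  "cip x y = (\<Sum>i\<in>UNIV. cnj (x$i) * y$i)"

definition outer :: "complex^'n \<Rightarrow> complex^'n \<Rightarrow> complex^'n^'n" where
  "outer x y = (\<chi> i j. x$i * cnj (y$j))"

lemma proj_outer: "proj v = outer v v"
  by (simp add: proj_def outer_def)

lemma outer_component[simp]: "outer x y $ i $ j = x$i * cnj (y$j)"
  by (simp add: outer_def)

lemma cip_cadj: "cip (A *v x) y = cip x (cadj A *v y)"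
  apply (simp add: cip_def matrix_vector_mult_def sum_distrib_left sum_distrib_right mult_ac)
  by (rule sum.swap)

lemma mm_outer_left: "A ** outer x y = outer (A *v x) y"
  by (simp add: vec_eq_iff matrix_matrix_mult_def matrix_vector_mult_def sum_distrib_right sum_distrib_left mult_ac)

lemma mm_outer_right: "outer x y ** B = outer x (cadj B *v y)"
  by (simp add: vec_eq_iff matrix_matrix_mult_def matrix_vector_mult_def sum_distrib_left mult_ac)

lemma cadj_outer: "cadj (outer x y) = outer y x"
  by (simp add: vec_eq_iff)

lemma outer_mv: "outer x y *v z = cip y z *s x"
  by (simp add: vec_eq_iff matrix_vector_mult_def cip_def sum_distrib_left sum_distrib_right mult_ac)

lemma trace_outer: "trace (A ** outer x y) = cip y (A *v x)"
  by (simp add: trace_def mm_outer_left cip_def mult.commute)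

lemma outer_outer: "outer x y ** outer z w = smat (cip y z) (outer x w)"
  by (simp add: vec_eq_iff matrix_matrix_mult_def cip_def sum_distrib_left sum_distrib_right mult_ac)

lemma cip_self: "cip x x = complex_of_real ((norm x)^2)"
proof -
  have "(norm x)^2 = (\<Sum>i\<in>UNIV. (norm (x$i))^2)"
    by (simp add: norm_vec_def L2_set_def sum_nonneg)
  have "cip x x = (\<Sum>i\<in>UNIV. complex_of_real ((norm (x$i))^2))"
    unfolding cip_def by (rule sum.cong) (simp_all add: complex_norm_square[symmetric] mult.commute)
  then show ?thesis using \<open>(norm x)^2 = _\<close> by (simp add: of_real_sum[symmetric])
qed

lemma bilin_B: fixes H P :: "complex^'n^'n" shows "bilinear (\<lambda>X Y. Re (trace (H ** X ** P ** cadj (Y::complex^'n^'n))))"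
  unfolding bilinear_def
proof (intro conjI allI)
  fix X :: "complex^'n^'n"
  show "linear (\<lambda>Y. Re (trace (H ** X ** P ** cadj (Y::complex^'n^'n))))"
    by (rule linearI) (simp_all add: cadj_add matrix_add_ldistrib trace_add scaleR_smult cadj_smult
         smult_mm_right trace_smult)
next
  fix Y :: "complex^'n^'n"
  show "linear (\<lambda>X. Re (trace (H ** X ** P ** cadj (Y::complex^'n^'n))))"
    by (rule linearI) (simp_all add: matrix_add_ldistrib mm_add_right trace_add scaleR_smult
         smult_mm_right smult_mm_left trace_smult)
qed

lemma f_deriv: fixes H P :: "complex^'n^'n" shows
  "((\<lambda>V. Re (trace (H ** V ** P ** cadj V))) has_derivative
     (\<lambda>X. Re (trace (H ** U ** P ** cadj X)) + Re (trace (H ** X ** P ** cadj (U::complex^'n^'n))))) (at U)"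
proof -
  have bb: "bounded_bilinear (\<lambda>X Y. Re (trace (H ** X ** P ** cadj (Y::complex^'n^'n))))"
    using bilin_B bilinear_conv_bounded_bilinear by blast
  show ?thesis
    using bounded_bilinear.FDERIV[OF bb has_derivative_ident has_derivative_ident] by simp
qed

lemma curve_lemma:
  fixes c :: "real \<Rightarrow> 'a::real_normed_vector" and f :: "'a \<Rightarrow> real"
  assumes c_in: "\<And>t. c t \<in> S" and c0: "c 0 = U" and cd: "(c has_vector_derivative \<xi>) (at 0)"
    and Df: "(f has_derivative Df) (at U within S)" and D: "(f has_derivative D) (at U)"
  shows "Df \<xi> = D \<xi>"
proof -
  have c': "(c has_derivative (\<lambda>t. t *\<^sub>R \<xi>)) (at 0)"
    using cd by (simp add: has_vector_derivative_def)
  have sub: "range c \<subseteq> S" using c_in by auto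
  have Df': "(f has_derivative Df) (at (c 0) within range c)"
    using has_derivative_subset[OF Df[folded c0] sub] .
  have h1: "((\<lambda>t. f (c t)) has_derivative (\<lambda>t. Df (t *\<^sub>R \<xi>))) (at 0)"
    using has_derivative_in_compose[OF c' Df'] by simp
  have h2: "((\<lambda>t. f (c t)) has_derivative (\<lambda>t. D (t *\<^sub>R \<xi>))) (at 0)"
    using has_derivative_compose[OF c' D[folded c0]] by simp
  have "(\<lambda>t. Df (t *\<^sub>R \<xi>)) = (\<lambda>t. D (t *\<^sub>R \<xi>))"
    using has_derivative_unique[OF h1 h2] .
  then show ?thesis by (metis scaleR_one)
qed

lemma smat_add: "smat a P + smat b P = smat (a + b) P"
  by (simp add: vec_eq_iff distrib_right)

lemma smat_add_right: "smat a (X + Y) = smat a X + smat a Y"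
  by (simp add: vec_eq_iff distrib_left)

lemma smat_smat: "smat a (smat b P) = smat (a * b) P"
  by (simp add: vec_eq_iff mult.assoc)

lemma smat_zero[simp]: "smat a 0 = 0" "smat 0 P = 0"
  by (simp_all add: vec_eq_iff)

lemma smat_one[simp]: "smat 1 P = P"
  by (simp add: vec_eq_iff)

lemma one_plus_mult:
  fixes P :: "complex^'n^'n"
  assumes PP: "P ** P = smat m P"
  shows "(mat 1 + smat a P) ** (mat 1 + smat b P) = mat 1 + smat (a + b + a*b*m) P"
proof -
  have "(mat 1 + smat a P) ** (mat 1 + smat b P) = mat 1 + smat b P + smat a P + smat (a*b) (P ** P)"
    by (simp add: matrix_add_ldistrib mm_add_right smult_mm_left smult_mm_right smat_smat smat_add_right algebra_simps)
  also have "\<dots> = mat 1 + smat (a + b + a*b*m) P"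
    by (simp add: PP smat_smat smat_add[symmetric] algebra_simps)
  finally show ?thesis .
qed

lemma cadj_proj[simp]: "cadj (proj v) = proj v"
  by (simp add: proj_outer cadj_outer)

lemma proj_zero[simp]: "proj 0 = 0"
  by (simp add: vec_eq_iff proj_def)

lemma proj_sq: "proj v ** proj v = smat (complex_of_real ((norm v)^2)) (proj v)"
  by (simp add: proj_outer outer_outer cip_self)

lemma coeff_zero:
  assumes n: "n \<noteq> 0"
  shows "cnj ((exp (\<i> * complex_of_real t) - 1) / complex_of_real n)
     + (exp (\<i> * complex_of_real t) - 1) / complex_of_real n
     + cnj ((exp (\<i> * complex_of_real t) - 1) / complex_of_real n)
       * ((exp (\<i> * complex_of_real t) - 1) / complex_of_real n) * complex_of_real n = 0"
proof -
  define e where "e = exp (\<i> * complex_of_real t)"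
  define e' where "e' = exp (- (\<i> * complex_of_real t))"
  have ce: "cnj e = e'" unfolding e_def e'_def by (simp add: exp_cnj)
  have ee: "e * e' = 1" unfolding e_def e'_def by (rule exp_minus_inverse)
  have nz: "complex_of_real n \<noteq> 0" using n by simp
  have "cnj ((e - 1) / complex_of_real n) + (e - 1) / complex_of_real n
     + cnj ((e - 1) / complex_of_real n) * ((e - 1) / complex_of_real n) * complex_of_real n
     = (e * e' - 1) / complex_of_real n"
    using nz by (simp add: ce field_simps)
  also have "\<dots> = 0" using ee by simp
  finally show ?thesis unfolding e_def .
qed

lemma proj_direction:
  fixes f :: "complex^'n^'n \<Rightarrow> real"
  assumes U: "unitary U" and Df: "(f has_derivative Df) (at U within {V. unitary V})"
    and D: "(f has_derivative D) (at U)"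
  shows "Df (smat \<i> (proj v) ** U) = D (smat \<i> (proj v) ** U)"
proof (cases "v = 0")
  case True
  have l1: "linear Df" using has_derivative_bounded_linear[OF Df] bounded_linear.linear by blast
  have l2: "linear D" using has_derivative_bounded_linear[OF D] bounded_linear.linear by blast
  show ?thesis using True linear_0[OF l1] linear_0[OF l2] by simp
next
  case False
  define n where "n = (norm v)^2"
  have n: "n \<noteq> 0" using False by (simp add: n_def)
  define P where "P = proj v"
  define g where "g = (\<lambda>z::complex. (exp (\<i> * (z * complex_of_real n)) - 1) / complex_of_real n)"
  define M where "M = P ** U"
  define c where "c = (\<lambda>t::real. U + smat (g (complex_of_real t)) M)"
  have PP: "P ** P = smat (complex_of_real n) P" unfolding P_def n_def by (rule proj_sq)
  have cform: "c t = (mat 1 + smat (g (complex_of_real t)) P) ** U" for t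
    unfolding c_def M_def by (simp add: mm_add_right smult_mm_left)
  have cunit: "unitary (c t)" for t
  proof -
    define a where "a = g (complex_of_real t)"
    have "cadj (c t) ** c t = cadj U ** ((mat 1 + smat (cnj a) P) ** (mat 1 + smat a P)) ** U"
      unfolding cform a_def[symmetric]
      by (simp add: cadj_mult cadj_add cadj_smult P_def matrix_mul_assoc)
    also have "(mat 1 + smat (cnj a) P) ** (mat 1 + smat a P) = mat 1"
    proof -
      have "cnj a + a + cnj a * a * complex_of_real n = 0"
        unfolding a_def g_def using coeff_zero[OF n, of "t * n"] by (simp add: mult.commute)
      then show ?thesis using one_plus_mult[OF PP] by simp
    qed
    finally show ?thesis using U unfolding unitary_def by simp
  qed
  have c0: "c 0 = U" unfolding c_def g_def by simp
  have gd: "(g has_field_derivative \<i>) (at (complex_of_real 0))"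
    unfolding g_def using n by (auto intro!: derivative_eq_intros simp: field_simps)
  have gv: "((\<lambda>t. g (complex_of_real t)) has_derivative (\<lambda>h. h *\<^sub>R \<i>)) (at 0)"
    using has_vector_derivative_real_field[OF gd, of UNIV] by (simp add: has_vector_derivative_def)
  define Lm where "Lm = (\<lambda>z. smat z M)"
  have lin: "linear Lm"
    unfolding Lm_def by (rule linearI) (simp_all add: smat_add[symmetric] scaleR_smult smat_smat scaleR_conv_of_real)
  have bl: "bounded_linear Lm" using lin linear_conv_bounded_linear by blast
  have "((\<lambda>t. U + Lm (g (complex_of_real t))) has_derivative (\<lambda>h. 0 + Lm (h *\<^sub>R \<i>))) (at 0)"
    by (rule has_derivative_add[OF has_derivative_const bounded_linear.has_derivative[OF bl gv]])
  then have "(c has_vector_derivative (smat \<i> P ** U)) (at 0)"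
    unfolding has_vector_derivative_def c_def
    by (simp add: Lm_def M_def smult_mm_left scaleR_smult smat_smat scaleR_conv_of_real)
  then show ?thesis
    using curve_lemma[of c "{V. unitary V}" U "smat \<i> P ** U" f Df D] cunit c0 Df D
    unfolding P_def by simp
qed



definition pv :: "complex \<Rightarrow> 'n \<Rightarrow> 'n \<Rightarrow> complex^'n" where
  "pv z j k = (\<chi> i. of_bool (i = j) + of_bool (i = k) * z)"

lemma alg4: "\<i> * ((a + b * z) * (c + d * cnj z)) - \<i> * ((a + b * - z) * (c + d * cnj (- z)))
   = 2 * \<i> * (a * d * cnj z + b * c * z)" for a b c d z :: complex
  by (simp add: ring_distribs)

lemma proj_diff_entry:
  "(smat \<i> (proj (pv z j k)) - smat \<i> (proj (pv (-z) j k))) $ a $ b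
     = 2 * \<i> * (of_bool (a = j) * of_bool (b = k) * cnj z + of_bool (a = k) * of_bool (b = j) * z)"
proof -
  have "(smat \<i> (proj (pv z j k)) - smat \<i> (proj (pv (-z) j k))) $ a $ b
    = \<i> * ((of_bool (a = j) + of_bool (a = k) * z) * (of_bool (b = j) + of_bool (b = k) * cnj z))
      - \<i> * ((of_bool (a = j) + of_bool (a = k) * - z) * (of_bool (b = j) + of_bool (b = k) * cnj (- z)))"
    unfolding pv_def proj_def by simp
  also have "\<dots> = 2 * \<i> * (of_bool (a = j) * of_bool (b = k) * cnj z + of_bool (a = k) * of_bool (b = j) * z)" by (rule alg4)
  finally show ?thesis .
qed
lemma sd1: "(\<Sum>k\<in>(UNIV::'n::finite set). of_bool (b = k) * (X k::complex)) = X b"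
proof -
  have "(\<Sum>k\<in>UNIV. of_bool (b = k) * X k) = (\<Sum>k\<in>UNIV. if b = k then X k else 0)"
    by (rule sum.cong) auto
  then show ?thesis by (simp add: sum.delta)
qed

lemma sum_delta2: "(\<Sum>j\<in>(UNIV::'n::finite set). \<Sum>k\<in>(UNIV::'n set). of_bool (a = j) * of_bool (b = k) * (w j k::complex)) = w a b"
proof -
  have "(\<Sum>j\<in>UNIV. \<Sum>k\<in>UNIV. of_bool (a = j) * of_bool (b = k) * (w j k::complex))
     = (\<Sum>j\<in>UNIV. of_bool (a = j) * (\<Sum>k\<in>UNIV. of_bool (b = k) * w j k))"
    by (simp only: sum_distrib_left mult.assoc)
  also have "\<dots> = w a b" by (simp only: sd1)
  finally show ?thesis .
qed

lemma sum_delta2': "(\<Sum>j\<in>(UNIV::'n::finite set). \<Sum>k\<in>(UNIV::'n set). of_bool (a = k) * of_bool (b = j) * (w j k::complex)) = w b a"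
proof -
  have "(\<Sum>j\<in>UNIV. \<Sum>k\<in>UNIV. of_bool (a = k) * of_bool (b = j) * (w j k::complex))
     = (\<Sum>j\<in>UNIV. of_bool (b = j) * (\<Sum>k\<in>UNIV. of_bool (a = k) * w j k))"
    by (simp only: sum_distrib_left mult.assoc mult.left_commute)
  also have "\<dots> = w b a" by (simp only: sd1)
  finally show ?thesis .
qed

lemma skew_decomp:
  fixes \<Omega> :: "complex^'n^'n"
  assumes sk: "skew_herm \<Omega>"
  shows "\<Omega> = (\<Sum>j\<in>UNIV. \<Sum>k\<in>UNIV. (1/4) *\<^sub>R
     (smat \<i> (proj (pv (\<i> * cnj (\<Omega>$j$k)) j k)) - smat \<i> (proj (pv (- (\<i> * cnj (\<Omega>$j$k))) j k))))"
proof -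
  have skc: "cnj (\<Omega>$b$a) = - \<Omega>$a$b" for a b
    using sk unfolding skew_herm_def vec_eq_iff by (metis cadj_component vector_uminus_component)
  show ?thesis
  proof (simp only: vec_eq_iff sum_component vector_scaleR_component proj_diff_entry, intro allI)
    fix a b
    have "(\<Sum>j\<in>UNIV. \<Sum>k\<in>UNIV. (1/4) *\<^sub>R (2 * \<i> * (of_bool (a = j) * of_bool (b = k) * cnj (\<i> * cnj (\<Omega>$j$k))
            + of_bool (a = k) * of_bool (b = j) * (\<i> * cnj (\<Omega>$j$k)))))
        = (1/4) *\<^sub>R (2 * \<i> * ((\<Sum>j\<in>UNIV. \<Sum>k\<in>UNIV. of_bool (a = j) * of_bool (b = k) * cnj (\<i> * cnj (\<Omega>$j$k)))
            + (\<Sum>j\<in>UNIV. \<Sum>k\<in>UNIV. of_bool (a = k) * of_bool (b = j) * (\<i> * cnj (\<Omega>$j$k)))))"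
      by (simp only: scaleR_sum_right sum_distrib_left sum.distrib distrib_left scaleR_add_right)
    also have "\<dots> = (1/4) *\<^sub>R (2 * \<i> * (cnj (\<i> * cnj (\<Omega>$a$b)) + \<i> * cnj (\<Omega>$b$a)))"
      by (simp only: sum_delta2 sum_delta2')
    also have "\<dots> = \<Omega>$a$b" using skc[of b a] skc[of a b]
      by (simp add: scaleR_conv_of_real ring_distribs)
    finally show "\<Omega>$a$b = (\<Sum>j\<in>UNIV. \<Sum>k\<in>UNIV. (1/4) *\<^sub>R (2 * \<i> * (of_bool (a = j) * of_bool (b = k) * cnj (\<i> * cnj (\<Omega>$j$k))
            + of_bool (a = k) * of_bool (b = j) * (\<i> * cnj (\<Omega>$j$k)))))" by simp
  qed
qed

lemma lin_decomp:
  fixes T :: "complex^'n^'n \<Rightarrow> real"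
  assumes lin: "linear T" and sk: "skew_herm \<Omega>"
  shows "T \<Omega> = (\<Sum>j\<in>UNIV. \<Sum>k\<in>UNIV. (1/4) *\<^sub>R
     (T (smat \<i> (proj (pv (\<i> * cnj (\<Omega>$j$k)) j k))) - T (smat \<i> (proj (pv (- (\<i> * cnj (\<Omega>$j$k))) j k)))))"
proof -
  have "T \<Omega> = T (\<Sum>j\<in>UNIV. \<Sum>k\<in>UNIV. (1/4) *\<^sub>R
     (smat \<i> (proj (pv (\<i> * cnj (\<Omega>$j$k)) j k)) - smat \<i> (proj (pv (- (\<i> * cnj (\<Omega>$j$k))) j k))))"
    using arg_cong[OF skew_decomp[OF sk], of T] .
  also have "\<dots> = (\<Sum>j\<in>UNIV. \<Sum>k\<in>UNIV. (1/4) *\<^sub>R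
     (T (smat \<i> (proj (pv (\<i> * cnj (\<Omega>$j$k)) j k))) - T (smat \<i> (proj (pv (- (\<i> * cnj (\<Omega>$j$k))) j k)))))"
    by (simp only: linear_sum[OF lin] linear_scale[OF lin] linear_diff[OF lin] o_def)
  finally show ?thesis .
qed

lemma skew_direction:
  fixes f :: "complex^'n^'n \<Rightarrow> real"
  assumes U: "unitary U" and Df: "(f has_derivative Df) (at U within {V. unitary V})"
    and D: "(f has_derivative D) (at U)" and sk: "skew_herm \<Omega>"
  shows "Df (\<Omega> ** U) = D (\<Omega> ** U)"
proof -
  have linR: "linear (\<lambda>M::complex^'n^'n. M ** U)"
    by (rule linearI) (simp_all add: mm_add_right scaleR_smult smult_mm_left)
  have l1: "linear Df" using has_derivative_bounded_linear[OF Df] bounded_linear.linear by blast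
  have l2: "linear D" using has_derivative_bounded_linear[OF D] bounded_linear.linear by blast
  have L1: "linear (\<lambda>M. Df (M ** U))" using linear_compose[OF linR l1] by (simp add: o_def)
  have L2: "linear (\<lambda>M. D (M ** U))" using linear_compose[OF linR l2] by (simp add: o_def)
  show ?thesis
    unfolding lin_decomp[OF L1 sk] lin_decomp[OF L2 sk]
    using proj_direction[OF U Df D] by simp
qed



lemma cip_add_right: "cip x (y + z) = cip x y + cip x z"
  by (simp add: cip_def sum.distrib distrib_left)
lemma cip_add_left: "cip (x + y) z = cip x z + cip y z"
  by (simp add: cip_def sum.distrib distrib_right)
lemma cip_diff_right: "cip x (y - z) = cip x y - cip x z"
  by (simp add: cip_def sum_subtractf right_diff_distrib)
lemma cip_diff_left: "cip (x - y) z = cip x z - cip y z"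
  by (simp add: cip_def sum_subtractf left_diff_distrib)
lemma cip_smult_right: "cip x (c *s y) = c * cip x y"
  by (simp add: cip_def sum_distrib_left mult_ac)
lemma cip_smult_left: "cip (c *s x) y = cnj c * cip x y"
  by (simp add: cip_def sum_distrib_left mult_ac)
lemma cip_cnj: "cnj (cip x y) = cip y x"
  by (simp add: cip_def mult.commute)
lemma cip_zero[simp]: "cip 0 x = 0" "cip x 0 = 0"
  by (simp_all add: cip_def)

lemma mv_smat: "smat c A *v x = c *s (A *v x)"
  by (simp add: vec_eq_iff matrix_vector_mult_def sum_distrib_left mult_ac)
lemma mv_add: "(A + B) *v x = A *v x + B *v (x::complex^'n)"
  by (simp add: vec_eq_iff matrix_vector_mult_def sum.distrib distrib_right)
lemma mv_diff: "(A - B) *v x = A *v x - B *v (x::complex^'n)"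
  by (simp add: vec_eq_iff matrix_vector_mult_def sum_subtractf left_diff_distrib)

lemma proj_conj: "A ** proj v ** cadj A = proj (A *v v)"
  by (simp add: proj_outer mm_outer_left mm_outer_right matrix_vector_mul_assoc)

lemma minner_zero:
  assumes "minner A A = 0" shows "A = 0"
proof -
  have "trace (cadj A ** A) = (\<Sum>i\<in>UNIV. \<Sum>k\<in>UNIV. complex_of_real ((norm (A$k$i))^2))"
    unfolding trace_def matrix_matrix_mult_def
    by (simp add: complex_norm_square[symmetric] mult.commute)
  then have "(\<Sum>i\<in>UNIV. \<Sum>k\<in>UNIV. (norm (A$k$i))^2) = 0"
    using assms unfolding minner_def by (simp add: of_real_sum[symmetric])
  then have "\<forall>i\<in>UNIV. (\<Sum>k\<in>UNIV. (norm (A$k$i))^2) = 0"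
    by (subst sum_nonneg_eq_0_iff[symmetric]) (auto intro: sum_nonneg)
  then have "\<forall>i k. (norm (A$k$i))^2 = 0"
    by (simp add: sum_nonneg_eq_0_iff)
  then show ?thesis by (simp add: vec_eq_iff)
qed

lemma householder:
  fixes phi w :: "complex^'n"
  assumes p1: "cip phi phi = 1" and w1: "cip w w = 1" and r: "cip w phi = complex_of_real r"
  shows "\<exists>R. unitary R \<and> R *v phi = w"
proof (cases "w = phi")
  case True
  then show ?thesis by (intro exI[of _ "mat 1"]) (simp add: unitary_def)
next
  case False
  define v where "v = phi - w"
  define m where "m = complex_of_real ((norm v)^2)"
  have vnz: "v \<noteq> 0" using False by (simp add: v_def)
  have mnz: "m \<noteq> 0" using vnz by (simp add: m_def)
  have cvv: "cip v v = m" by (simp add: m_def cip_self)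
  have rr: "cip phi w = complex_of_real r" using r cip_cnj[of w phi] by simp
  have m2: "m = 2 - 2 * complex_of_real r"
    using cvv[symmetric] by (simp add: v_def cip_diff_left cip_diff_right p1 w1 r rr)
  have cvp: "cip v phi = 1 - complex_of_real r"
    by (simp add: v_def cip_diff_left p1 r)
  define R where "R = mat 1 + smat (- 2 / m) (proj v)"
  have cm: "cnj m = m" by (simp add: m_def)
  have cR: "cadj R = R"
    by (simp add: R_def cadj_add cadj_smult cm)
  have RR: "R ** R = mat 1"
  proof -
    have "R ** R = mat 1 + smat (- 2 / m + - 2 / m + (- 2 / m) * (- 2 / m) * m) (proj v)"
      unfolding R_def by (rule one_plus_mult) (simp add: proj_sq m_def)
    also have "- 2 / m + - 2 / m + (- 2 / m) * (- 2 / m) * m = 0"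
      using mnz by (simp add: field_simps)
    finally show ?thesis by simp
  qed
  have "R *v phi = phi + (- 2 / m) *s (cip v phi *s v)"
    by (simp add: R_def mv_add mv_smat proj_outer outer_mv)
  also have "(- 2 / m) * cip v phi = -1"
    using mnz unfolding cvp m2 by (simp add: field_simps)
  then have "phi + (- 2 / m) *s (cip v phi *s v) = w"
    by (simp add: vector_smult_assoc v_def)
  finally have "R *v phi = w" .
  moreover have "unitary R" using RR cR by (simp add: unitary_def)
  ultimately show ?thesis by blast
qed



lemma unitary_right: "unitary U \<Longrightarrow> U ** cadj U = mat 1"
  unfolding unitary_def using matrix_left_right_inverse by blast

lemma unitary_cip: "unitary V \<Longrightarrow> cip (V *v x) (V *v x) = cip x x"
  unfolding unitary_def by (simp add: cip_cadj matrix_vector_mul_assoc)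

lemma herm_cip: "cadj H = H \<Longrightarrow> cip (H *v x) y = cip x (H *v y)"
  by (simp add: cip_cadj)

lemma pyth:
  assumes herm: "cadj H = H" and idem: "H ** H = H"
  shows "cip w w = cip (H *v w) (H *v w) + cip (w - H *v w) (w - H *v w)"
    and "cip w (H *v w) = cip (H *v w) (H *v w)"
proof -
  have hh: "H *v (H *v w) = H *v w" using idem by (simp add: matrix_vector_mul_assoc)
  show e: "cip w (H *v w) = cip (H *v w) (H *v w)"
    using herm_cip[OF herm, of w "H *v w"] hh by simp
  have e2: "cip (H *v w) w = cip (H *v w) (H *v w)"
    using herm_cip[OF herm, of "H *v w" w] hh by simp
  show "cip w w = cip (H *v w) (H *v w) + cip (w - H *v w) (w - H *v w)"
    by (simp add: cip_diff_left cip_diff_right e e2)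
qed

lemma f_cip:
  assumes f_def: "\<And>V. f V = Re (trace (H ** V ** proj psi0 ** cadj V))"
  shows "f V = Re (cip (V *v psi0) (H *v (V *v psi0)))"
proof -
  have "H ** V ** proj psi0 ** cadj V = H ** (V ** proj psi0 ** cadj V)"
    by (simp add: matrix_mul_assoc)
  also have "\<dots> = H ** proj (V *v psi0)" by (simp only: proj_conj)
  finally have "H ** V ** proj psi0 ** cadj V = H ** proj (V *v psi0)" .
  then show ?thesis by (simp add: f_def proj_outer trace_outer)
qed

lemma f_range:
  assumes herm: "cadj H = H" and idem: "H ** H = H" and unit: "norm psi0 = 1"
    and f_def: "\<And>V. f V = Re (trace (H ** V ** proj psi0 ** cadj V))"
    and V: "unitary V"
  shows "0 \<le> f V \<and> f V \<le> 1"
proof -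
  define w where "w = V *v psi0"
  have w1: "cip w w = 1" unfolding w_def using unitary_cip[OF V] unit by (simp add: cip_self)
  have fv: "f V = Re (cip (H *v w) (H *v w))"
    using f_cip[OF f_def] pyth(2)[OF herm idem] by (simp add: w_def)
  have "1 = Re (cip (H *v w) (H *v w)) + Re (cip (w - H *v w) (w - H *v w))"
    using pyth(1)[OF herm idem, of w] w1 by (metis one_complex.sel(1) plus_complex.sel(1))
  then show ?thesis unfolding fv by (simp add: cip_self) (smt (verit) zero_le_power2)
qed

lemma minner_diff: "minner (A - B) C = minner A C - minner B C"
  by (simp add: minner_def cadj_diff mm_diff_right trace_sub)

lemma grad_eq:
  fixes H :: "complex^'n^'n" and psi0 :: "complex^'n"
    and f :: "complex^'n^'n \<Rightarrow> real" and U :: "complex^'n^'n"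
  assumes herm: "cadj H = H"
    and f_def: "\<And>V. f V = Re (trace (H ** V ** proj psi0 ** cadj V))"
    and U: "unitary U"
  shows "skew_grad f U = H ** (U ** proj psi0 ** cadj U) - (U ** proj psi0 ** cadj U) ** H"
proof -
  define P0 where "P0 = proj psi0"
  define \<psi> where "\<psi> = U ** P0 ** cadj U"
  define G where "G = H ** \<psi> - \<psi> ** H"
  define D where "D = (\<lambda>X. Re (trace (H ** U ** P0 ** cadj X)) + Re (trace (H ** X ** P0 ** cadj U)))"
  have feq: "f = (\<lambda>V. Re (trace (H ** V ** P0 ** cadj V)))" using f_def by (auto simp: P0_def)
  have fd: "(f has_derivative D) (at U)" unfolding feq D_def by (rule f_deriv)
  have UU: "U ** cadj U = mat 1" using unitary_right[OF U] .
  have c\<psi>: "cadj \<psi> = \<psi>" unfolding \<psi>_def P0_def proj_conj by simp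
  have skG: "skew_herm G"
    unfolding skew_herm_def G_def by (simp add: cadj_diff cadj_mult c\<psi> herm)
  have cG: "cadj G = - G" using skG unfolding skew_herm_def .
  have key: "D (\<Omega> ** U) = minner (G ** U) (\<Omega> ** U)" if sk: "skew_herm \<Omega>" for \<Omega>
  proof -
    have cO: "cadj \<Omega> = - \<Omega>" using sk unfolding skew_herm_def .
    have t1: "H ** U ** P0 ** cadj (\<Omega> ** U) = - (H ** \<psi> ** \<Omega>)"
      by (simp add: cadj_mult cO matrix_mul_assoc mm_uminus_right \<psi>_def)
    have t2: "H ** (\<Omega> ** U) ** P0 ** cadj U = H ** \<Omega> ** \<psi>"
      by (simp add: matrix_mul_assoc \<psi>_def)
    have t3: "trace (H ** \<Omega> ** \<psi>) = trace (\<psi> ** H ** \<Omega>)"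
      using trace_mul_sym[of "H ** \<Omega>" \<psi>] by (simp add: matrix_mul_assoc)
    have "minner (G ** U) (\<Omega> ** U) = Re (trace (cadj U ** (cadj G ** \<Omega> ** U)))"
      by (simp add: minner_def cadj_mult matrix_mul_assoc)
    also have "\<dots> = Re (trace (cadj G ** \<Omega> ** (U ** cadj U)))"
      using trace_mul_sym[of "cadj U" "cadj G ** \<Omega> ** U"] by (simp add: matrix_mul_assoc)
    also have "\<dots> = Re (trace (\<psi> ** H ** \<Omega>)) - Re (trace (H ** \<psi> ** \<Omega>))"
      by (simp add: UU cG mm_uminus_left trace_uminus) (simp add: G_def mm_diff_right trace_sub)
    also have "\<dots> = D (\<Omega> ** U)"
      unfolding D_def t1 t2 t3 by (simp add: trace_uminus)
    finally show ?thesis by simp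
  qed
  have ex: "skew_herm G \<and> is_riem_grad f U (G ** U)"
    unfolding is_riem_grad_def tangent_space_def
    using skG fd key by (auto intro!: exI[of _ D] has_derivative_at_withinI)
  have un: "\<Omega> = G" if h: "skew_herm \<Omega> \<and> is_riem_grad f U (\<Omega> ** U)" for \<Omega>
  proof -
    have skO: "skew_herm \<Omega>" using h by simp
    obtain Df where Df: "(f has_derivative Df) (at U within {V. unitary V})"
      and DfE: "\<forall>\<xi>\<in>tangent_space U. minner (\<Omega> ** U) \<xi> = Df \<xi>"
      using h unfolding is_riem_grad_def by blast
    define X where "X = \<Omega> - G"
    have skX: "skew_herm X"
      using skO skG unfolding skew_herm_def X_def by (simp add: cadj_diff)
    have tX: "X ** U \<in> tangent_space U" using skX unfolding tangent_space_def by blast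
    have "minner (\<Omega> ** U) (X ** U) = minner (G ** U) (X ** U)"
      using DfE tX skew_direction[OF U Df fd skX] key[OF skX] by simp
    then have "minner (X ** U) (X ** U) = 0"
      by (simp add: X_def mm_diff_right minner_diff)
    then have "X ** U = 0" by (rule minner_zero)
    then have "X ** U ** cadj U = 0" by simp
    then have "X = 0" by (simp add: UU flip: matrix_mul_assoc)
    then show ?thesis by (simp add: X_def)
  qed
  have "skew_grad f U = G"
    unfolding skew_grad_def using ex un by (rule the_equality)
  then show ?thesis by (simp add: G_def \<psi>_def P0_def)
qed

lemma unitary_mult: "unitary R \<Longrightarrow> unitary U \<Longrightarrow> unitary (R ** U)"
  unfolding unitary_def by (simp add: cadj_mult matrix_mul_assoc) (simp add: flip: matrix_mul_assoc)

lemma outer_zero[simp]: "outer 0 y = 0" "outer x 0 = 0"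
  by (simp_all add: vec_eq_iff)

lemma opt_part:
  fixes H :: "complex^'n^'n" and psi0 :: "complex^'n"
    and f :: "complex^'n^'n \<Rightarrow> real" and U :: "complex^'n^'n"
  assumes herm: "cadj H = H" and idem: "H ** H = H"
    and unit: "norm psi0 = 1"
    and f_def: "\<And>V. f V = Re (trace (H ** V ** proj psi0 ** cadj V))"
    and U: "unitary U"
  defines "G \<equiv> H ** (U ** proj psi0 ** cadj U) - (U ** proj psi0 ** cadj U) ** H"
  shows "(G = 0 \<longleftrightarrow>
              ((\<forall>V. unitary V \<longrightarrow> f U \<le> f V) \<or> (\<forall>V. unitary V \<longrightarrow> f V \<le> f U)))
         \<and> (G = 0 \<longrightarrow>
              f U \<in> {0, 1}
              \<and> (f U = 0 \<longrightarrow> (\<forall>V. unitary V \<longrightarrow> f U \<le> f V))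
              \<and> (f U = 1 \<longrightarrow> (\<forall>V. unitary V \<longrightarrow> f V \<le> f U)))"
proof -
  define \<phi> where "\<phi> = U *v psi0"
  define a where "a = H *v \<phi>"
  define b where "b = \<phi> - a"
  have p1: "cip \<phi> \<phi> = 1" unfolding \<phi>_def using unitary_cip[OF U] unit by (simp add: cip_self)
  have Gform: "G = outer a \<phi> - outer \<phi> a"
    unfolding G_def proj_conj proj_outer a_def \<phi>_def by (simp add: mm_outer_left mm_outer_right herm)
  have Ha: "H *v a = a" unfolding a_def using idem by (simp add: matrix_vector_mul_assoc)
  have pa: "cip \<phi> a = cip a a" unfolding a_def using pyth(2)[OF herm idem] .
  have ap: "cip a \<phi> = cip a a" using pa cip_cnj[of \<phi> a] cip_cnj[of a a] by simp
  have ab: "cip a b = 0" by (simp add: b_def cip_diff_right ap)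
  have ba: "cip b a = 0" using ab cip_cnj[of a b] by simp
  have fU: "f U = (norm a)^2"
  proof -
    have "f U = Re (cip \<phi> a)" using f_cip[OF f_def, of U] by (simp add: a_def \<phi>_def)
    then show ?thesis by (simp add: pa cip_self)
  qed
  have sum1: "(norm a)^2 + (norm b)^2 = 1"
  proof -
    have "cip \<phi> \<phi> = cip a a + cip b b" using pyth(1)[OF herm idem, of \<phi>] by (simp add: a_def b_def)
    then have "Re (cip \<phi> \<phi>) = Re (cip a a) + Re (cip b b)" by simp
    then have "1 = Re (cip a a) + Re (cip b b)" using p1 by simp
    then show ?thesis by (simp only: cip_self Re_complex_of_real)
  qed
  have range: "0 \<le> f V \<and> f V \<le> 1" if "unitary V" for V
    using f_range[OF herm idem unit f_def that] .
  have Z: "G = 0 \<longleftrightarrow> a = 0 \<or> b = 0"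
  proof
    assume G0: "G = 0"
    define c where "c = cip a \<phi>"
    have "G *v \<phi> = a - c *s \<phi>" unfolding Gform c_def by (simp add: mv_diff outer_mv p1)
    then have ac: "a = c *s \<phi>" using G0 by simp
    have "cip a b = cnj c * (1 - c)"
      unfolding b_def ac by (simp only: cip_diff_right cip_smult_left cip_smult_right p1) (simp add: right_diff_distrib mult_ac)
    then have "cnj c = 0 \<or> c = 1" using ab by simp
    then show "a = 0 \<or> b = 0"
    proof
      assume "cnj c = 0" then show ?thesis using ac by simp
    next
      assume "c = 1" then show ?thesis using ac by (simp add: b_def)
    qed
  next
    assume "a = 0 \<or> b = 0"
    then show "G = 0"
    proof
      assume "a = 0" then show ?thesis by (simp add: Gform)
    next
      assume "b = 0" then have "a = \<phi>" by (simp add: b_def)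
      then show ?thesis by (simp add: Gform)
    qed
  qed
  have val: "G = 0 \<Longrightarrow> f U = 0 \<or> f U = 1"
  proof -
    assume "G = 0"
    then have "a = 0 \<or> b = 0" using Z by simp
    then show ?thesis using fU sum1 by auto
  qed
  have witness: "\<exists>V. unitary V \<and> V *v psi0 = w" if w1: "cip w w = 1" and r: "cip w \<phi> = complex_of_real r" for w r
  proof -
    obtain R where R: "unitary R" "R *v \<phi> = w" using householder[OF p1 w1 r] by blast
    have "unitary (R ** U)" using unitary_mult[OF R(1) U] .
    moreover have "(R ** U) *v psi0 = w" using R(2) by (simp add: \<phi>_def flip: matrix_vector_mul_assoc)
    ultimately show ?thesis by blast
  qed
  have minG: "a = 0" if mn: "\<forall>V. unitary V \<longrightarrow> f U \<le> f V" and bnz: "b \<noteq> 0"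
  proof -
    define nb where "nb = norm b"
    have nb: "nb \<noteq> 0" using bnz by (simp add: nb_def)
    define w where "w = complex_of_real (1/nb) *s b"
    have Hb: "H *v b = 0" by (simp add: b_def matrix_vector_mult_diff_distrib Ha a_def[symmetric])
    have w1: "cip w w = 1"
    proof -
      have "cip w w = cnj (complex_of_real (1/nb)) * (complex_of_real (1/nb) * cip b b)"
        by (simp only: w_def cip_smult_left cip_smult_right ac_simps)
      then show ?thesis using nb by (simp add: cip_self nb_def power2_eq_square)
    qed
    have r: "cip w \<phi> = complex_of_real nb"
    proof -
      have "\<phi> = a + b" by (simp add: b_def)
      then have "cip b \<phi> = cip b b" by (simp add: cip_add_right ba)
      moreover have "cip w \<phi> = cnj (complex_of_real (1/nb)) * cip b \<phi>"
        by (simp only: w_def cip_smult_left)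
      ultimately show ?thesis using nb by (simp add: cip_self nb_def power2_eq_square)
    qed
    obtain V where V: "unitary V" "V *v psi0 = w" using witness[OF w1 r] by blast
    have Hw: "H *v w = 0" by (simp add: w_def vector_scalar_commute Hb)
    have "f V = Re (cip w (H *v w))" using f_cip[OF f_def, of V] V(2) by simp
    then have "f V = 0" by (simp add: Hw)
    then have "(norm a)^2 \<le> 0" using mn V(1) fU by auto
    then show ?thesis by simp
  qed
  have maxG: "b = 0" if mx: "\<forall>V. unitary V \<longrightarrow> f V \<le> f U" and anz: "a \<noteq> 0"
  proof -
    define na where "na = norm a"
    have na: "na \<noteq> 0" using anz by (simp add: na_def)
    define w where "w = complex_of_real (1/na) *s a"
    have w1: "cip w w = 1"
    proof -
      have "cip w w = cnj (complex_of_real (1/na)) * (complex_of_real (1/na) * cip a a)"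
        by (simp only: w_def cip_smult_left cip_smult_right ac_simps)
      then show ?thesis using na by (simp add: cip_self na_def power2_eq_square)
    qed
    have r: "cip w \<phi> = complex_of_real na"
    proof -
      have "cip w \<phi> = cnj (complex_of_real (1/na)) * cip a \<phi>"
        by (simp only: w_def cip_smult_left)
      then show ?thesis using na ap by (simp add: cip_self na_def power2_eq_square)
    qed
    obtain V where V: "unitary V" "V *v psi0 = w" using witness[OF w1 r] by blast
    have Hw: "H *v w = w" by (simp add: w_def vector_scalar_commute Ha)
    have "f V = Re (cip w (H *v w))" using f_cip[OF f_def, of V] V(2) by simp
    then have "f V = 1" using w1 by (simp add: Hw)
    then have "1 \<le> (norm a)^2" using mx V(1) fU by auto
    then have "(norm b)^2 \<le> 0" using sum1 by linarith
    then show ?thesis by simp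
  qed
  show ?thesis
  proof (intro conjI impI)
    show "G = 0 \<longleftrightarrow> ((\<forall>V. unitary V \<longrightarrow> f U \<le> f V) \<or> (\<forall>V. unitary V \<longrightarrow> f V \<le> f U))"
    proof
      assume "G = 0"
      then have "f U = 0 \<or> f U = 1" by (rule val)
      then show "(\<forall>V. unitary V \<longrightarrow> f U \<le> f V) \<or> (\<forall>V. unitary V \<longrightarrow> f V \<le> f U)"
        using range by auto
    next
      assume "(\<forall>V. unitary V \<longrightarrow> f U \<le> f V) \<or> (\<forall>V. unitary V \<longrightarrow> f V \<le> f U)"
      then have "a = 0 \<or> b = 0" using minG maxG by blast
      then show "G = 0" using Z by simp
    qed
  next
    assume "G = 0" then show "f U \<in> {0, 1}" using val by auto
  next
    assume "G = 0" "f U = 0" then show "\<forall>V. unitary V \<longrightarrow> f U \<le> f V" using range by auto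
  next
    assume "G = 0" "f U = 1" then show "\<forall>V. unitary V \<longrightarrow> f V \<le> f U" using range by auto
  qed
qed



theorem theorem4p1:
  fixes H :: "complex^'n^'n" and psi0 :: "complex^'n"
    and f :: "complex^'n^'n \<Rightarrow> real" and U :: "complex^'n^'n"
  assumes herm: "cadj H = H" and idem: "H ** H = H"
    and unit: "norm psi0 = 1"
    and f_def: "\<And>V. f V = Re (trace (H ** V ** proj psi0 ** cadj V))"
    and U: "unitary U"
  shows "skew_grad f U = H ** (U ** proj psi0 ** cadj U) - (U ** proj psi0 ** cadj U) ** H
         \<and> (skew_grad f U = 0 \<longleftrightarrow>
              ((\<forall>V. unitary V \<longrightarrow> f U \<le> f V) \<or> (\<forall>V. unitary V \<longrightarrow> f V \<le> f U)))
         \<and> (skew_grad f U = 0 \<longrightarrow>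
              f U \<in> {0, 1}
              \<and> (f U = 0 \<longrightarrow> (\<forall>V. unitary V \<longrightarrow> f U \<le> f V))
              \<and> (f U = 1 \<longrightarrow> (\<forall>V. unitary V \<longrightarrow> f V \<le> f U)))"
  unfolding grad_eq[OF herm f_def U]
  by (rule conjI[OF refl opt_part[OF herm idem unit f_def U]])

end
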